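(* If $G$ is a triangle-free graph with minimum degree $\delta(G)\ge 3$, then ${\rm gp}_{\rm d}(G)=0$.
   Context: For $S\subseteq V(G)$, two vertices $u,v$ are $S$-positionable if every shortest $u,v$-path $P$ satisfies $V(P)\cap S\subseteq\{u,v\}$. $S$ is a general position set if every two vertices of $S$ are $S$-positionable, and $S$ is a dual general position set if it is a general position set and every two vertices $u,v\in V(G)\setminus S$ are $S$-positionable. ${\rm gp}_{\rm d}(G)$ is the maximum size of a dual general position set of $G$. *)

theory Defs
  imports Main
begin

definition simple_graph :: "'a set \<Rightarrow> ('a \<Rightarrow> 'a \<Rightarrow> bool) \<Rightarrow> bool" where
  "simple_graph V E \<longleftrightarrow> finite V \<and> (\<forall>x y. E x y \<longrightarrow> E y x) \<and> (\<forall>x. \<not> E x x)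
     \<and> (\<forall>x y. E x y \<longrightarrow> x \<in> V \<and> y \<in> V)"

definition is_path :: "'a set \<Rightarrow> ('a \<Rightarrow> 'a \<Rightarrow> bool) \<Rightarrow> 'a list \<Rightarrow> bool" where
  "is_path V E P \<longleftrightarrow> P \<noteq> [] \<and> set P \<subseteq> V \<and> distinct P \<and> successively E P"

definition uv_path :: "'a set \<Rightarrow> ('a \<Rightarrow> 'a \<Rightarrow> bool) \<Rightarrow> 'a \<Rightarrow> 'a \<Rightarrow> 'a list \<Rightarrow> bool" where
  "uv_path V E u v P \<longleftrightarrow> is_path V E P \<and> hd P = u \<and> last P = v"

definition shortest_path :: "'a set \<Rightarrow> ('a \<Rightarrow> 'a \<Rightarrow> bool) \<Rightarrow> 'a \<Rightarrow> 'a \<Rightarrow> 'a list \<Rightarrow> bool" where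
  "shortest_path V E u v P \<longleftrightarrow> uv_path V E u v P \<and>
     (\<forall>Q. uv_path V E u v Q \<longrightarrow> length P \<le> length Q)"

definition connected_graph :: "'a set \<Rightarrow> ('a \<Rightarrow> 'a \<Rightarrow> bool) \<Rightarrow> bool" where
  "connected_graph V E \<longleftrightarrow> (\<forall>u\<in>V. \<forall>v\<in>V. \<exists>P. uv_path V E u v P)"

definition triangle_free :: "'a set \<Rightarrow> ('a \<Rightarrow> 'a \<Rightarrow> bool) \<Rightarrow> bool" where
  "triangle_free V E \<longleftrightarrow> \<not> (\<exists>x\<in>V. \<exists>y\<in>V. \<exists>z\<in>V. E x y \<and> E y z \<and> E x z)"

definition degree :: "'a set \<Rightarrow> ('a \<Rightarrow> 'a \<Rightarrow> bool) \<Rightarrow> 'a \<Rightarrow> nat" where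
  "degree V E v = card {u\<in>V. E v u}"

definition positionable :: "'a set \<Rightarrow> ('a \<Rightarrow> 'a \<Rightarrow> bool) \<Rightarrow> 'a set \<Rightarrow> 'a \<Rightarrow> 'a \<Rightarrow> bool" where
  "positionable V E S u v \<longleftrightarrow> (\<forall>P. shortest_path V E u v P \<longrightarrow> set P \<inter> S \<subseteq> {u, v})"

definition gp_set :: "'a set \<Rightarrow> ('a \<Rightarrow> 'a \<Rightarrow> bool) \<Rightarrow> 'a set \<Rightarrow> bool" where
  "gp_set V E S \<longleftrightarrow> S \<subseteq> V \<and> (\<forall>u\<in>S. \<forall>v\<in>S. u \<noteq> v \<longrightarrow> positionable V E S u v)"

definition dual_gp_set :: "'a set \<Rightarrow> ('a \<Rightarrow> 'a \<Rightarrow> bool) \<Rightarrow> 'a set \<Rightarrow> bool" where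
  "dual_gp_set V E S \<longleftrightarrow> gp_set V E S \<and>
     (\<forall>u\<in>V - S. \<forall>v\<in>V - S. u \<noteq> v \<longrightarrow> positionable V E S u v)"

definition gp_d :: "'a set \<Rightarrow> ('a \<Rightarrow> 'a \<Rightarrow> bool) \<Rightarrow> nat" where
  "gp_d V E = Max {card S | S. dual_gp_set V E S}"

end

theory Submission
  imports Defs
begin

lemma two_elems:
  assumes "finite A" "card A \<ge> 2"
  shows "\<exists>x y. x \<in> A \<and> y \<in> A \<and> x \<noteq> y"
proof (rule ccontr)
  assume "\<not> ?thesis"
  hence "\<forall>x\<in>A. \<forall>y\<in>A. x = y" by blast
  hence "card A \<le> 1" using card_le_Suc0_iff_eq[OF assms(1)] by simp
  thus False using assms(2) by simp
qed

lemma path3_shortest: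
  assumes sg: "simple_graph V E" and tf: "triangle_free V E"
    and e1: "E w u" and e2: "E w v" and uv: "u \<noteq> v"
  shows "shortest_path V E u v [u, w, v]"
proof -
  have sym: "E u w" "E v w" using sg e1 e2 unfolding simple_graph_def by blast+
  have inV: "u \<in> V" "v \<in> V" "w \<in> V" using sg e1 e2 unfolding simple_graph_def by blast+
  have "u \<noteq> w" "v \<noteq> w" using sg e1 e2 unfolding simple_graph_def by blast+
  hence up: "uv_path V E u v [u, w, v]"
    using inV sym e2 uv unfolding uv_path_def is_path_def by auto
  have nuv: "\<not> E u v" using tf inV sym e2 unfolding triangle_free_def by blast
  have "3 \<le> length Q" if q: "uv_path V E u v Q" for Q
  proof (rule ccontr)
    assume "\<not> 3 \<le> length Q"
    moreover have "Q \<noteq> []" using q unfolding uv_path_def is_path_def by blast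
    ultimately consider (a) x where "Q = [x]" | (b) x y where "Q = [x, y]"
    proof (cases Q)
      case (Cons a t)
      then show ?thesis using \<open>\<not> 3 \<le> length Q\<close> that
        by (cases t) (auto simp: numeral_3_eq_3 Suc_le_eq)
    qed (use \<open>Q \<noteq> []\<close> in simp)
    thus False
    proof cases
      case a thus False using q uv unfolding uv_path_def by auto
    next
      case b thus False using q nuv unfolding uv_path_def is_path_def by auto
    qed
  qed
  hence "\<forall>Q. uv_path V E u v Q \<longrightarrow> length [u, w, v] \<le> length Q" by (simp add: numeral_3_eq_3)
  thus ?thesis using up unfolding shortest_path_def by blast
qed

lemma no_vertex:
  assumes sg: "simple_graph V E" and tf: "triangle_free V E"
    and deg: "\<forall>v\<in>V. degree V E v \<ge> 3"
    and d: "dual_gp_set V E S" and wS: "w \<in> S"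
  shows False
proof -
  have SV: "S \<subseteq> V" using d unfolding dual_gp_set_def gp_set_def by blast
  define N where "N = {u\<in>V. E w u}"
  have fin: "finite N" using sg unfolding simple_graph_def N_def by auto
  have c3: "card N \<ge> 3" using deg wS SV unfolding degree_def N_def by blast
  have "card N = card (N \<inter> S) + card (N - S)"
    using fin by (metis card_Int_Diff)
  hence "card (N \<inter> S) \<ge> 2 \<or> card (N - S) \<ge> 2" using c3 by linarith
  then obtain u v where uvN: "u \<in> N" "v \<in> N" "u \<noteq> v"
    and cls: "(u \<in> S \<and> v \<in> S) \<or> (u \<in> V - S \<and> v \<in> V - S)"
  proof
    assume "card (N \<inter> S) \<ge> 2"
    then obtain x y where "x \<in> N \<inter> S" "y \<in> N \<inter> S" "x \<noteq> y"
      using two_elems[of "N \<inter> S"] fin by blast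
    thus ?thesis using that by blast
  next
    assume "card (N - S) \<ge> 2"
    then obtain x y where "x \<in> N - S" "y \<in> N - S" "x \<noteq> y"
      using two_elems[of "N - S"] fin by blast
    thus ?thesis using that unfolding N_def by blast
  qed
  have e: "E w u" "E w v" using uvN unfolding N_def by auto
  have sp: "shortest_path V E u v [u, w, v]"
    using path3_shortest[OF sg tf e uvN(3)] .
  have pos: "positionable V E S u v"
    using d cls uvN(3) unfolding dual_gp_set_def gp_set_def by blast
  have "w \<noteq> u" "w \<noteq> v" using sg e unfolding simple_graph_def by blast+
  have "w \<in> set [u, w, v] \<inter> S" using wS by simp
  thus False using pos sp \<open>w \<noteq> u\<close> \<open>w \<noteq> v\<close> unfolding positionable_def by blast
qed

theorem mainTheorem9:
  fixes V :: "'a set" and E :: "'a \<Rightarrow> 'a \<Rightarrow> bool"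
  assumes "simple_graph V E"
    and "connected_graph V E"
    and "triangle_free V E"
    and "\<forall>v\<in>V. degree V E v \<ge> 3"
  shows "gp_d V E = 0"
proof -
  have "dual_gp_set V E S \<longleftrightarrow> S = {}" for S
  proof
    assume "dual_gp_set V E S"
    thus "S = {}" using no_vertex[OF assms(1) assms(3) assms(4)] by blast
  next
    assume "S = {}"
    thus "dual_gp_set V E S"
      unfolding dual_gp_set_def gp_set_def positionable_def by auto
  qed
  hence "{card S | S. dual_gp_set V E S} = {0}" by auto
  thus ?thesis unfolding gp_d_def by simp
qed

end
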